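(* Let $n\ge3$, $1<k<n/2$, $p>\frac{nk}{n-2k}$, and let $u$ be a regular solution of (1.6). If $u(r)r^{\frac{2k}{p-k}}\to0$ as $r\to\infty$, then $u(r)=O(r^{\frac{2k-n}{k}})$ as $r\to\infty$.
   Context: Problem (1.6) is: given $\rho>0$, find $u$ with $-\tfrac{1}{k}C_{n-1}^{k-1}(r^{n-k}|u'|^{k-1}u')'=r^{n-1}u^{p}$, $u(r)>0$ for all $r>0$, $u'(0)=0$, $u(0)=\rho$, where $C_{n-1}^{k-1}$ is the binomial coefficient. A solution $u$ of (1.6) is regular if $x\mapsto u(|x|)$ belongs to $C^2(\mathbb{R}^n)$. *)

theory Defs
  imports "HOL-Analysis.Analysis" "HOL-Library.Landau_Symbols"
begin

definition C2_fun :: "('a::euclidean_space \<Rightarrow> real) \<Rightarrow> bool" where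
  "C2_fun f \<longleftrightarrow> (\<exists>g H. (\<forall>x. (f has_derivative (\<lambda>h. g x \<bullet> h)) (at x)) \<and>
      (\<forall>x. (g has_derivative H x) (at x)) \<and>
      (\<forall>i\<in>Basis. \<forall>j\<in>Basis. continuous_on UNIV (\<lambda>x. H x i \<bullet> j)))"

text \<open>Problem (1.6): radial k-Hessian equation with data rho. The ODE is required for r > 0;
  u' denotes the derivative of u. Values of u for r < 0 are irrelevant.\<close>
definition problem_1_6 :: "nat \<Rightarrow> nat \<Rightarrow> real \<Rightarrow> real \<Rightarrow> (real \<Rightarrow> real) \<Rightarrow> bool" where
  "problem_1_6 n k p \<rho> u \<longleftrightarrow>
     (\<forall>r>0. u r > 0) \<and>
     (u has_real_derivative 0) (at 0 within {0..}) \<and>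
     u 0 = \<rho> \<and>
     (\<forall>r>0. u differentiable (at r) \<and>
        (\<exists>D. ((\<lambda>s. s ^ (n - k) * \<bar>deriv u s\<bar> ^ (k - 1) * deriv u s) has_real_derivative D) (at r) \<and>
             - (1 / real k) * real ((n - 1) choose (k - 1)) * D = r ^ (n - 1) * (u r) powr p))"

definition regular_solution_1_6 :: "'n::finite itself \<Rightarrow> nat \<Rightarrow> real \<Rightarrow> real \<Rightarrow> (real \<Rightarrow> real) \<Rightarrow> bool" where
  "regular_solution_1_6 _ k p \<rho> u \<longleftrightarrow>
     problem_1_6 CARD('n) k p \<rho> u \<and> C2_fun (\<lambda>x::real^'n. u (norm x))"

end

theory Submission
  imports Defs
begin

lemma barrier:
  fixes f f' :: "real \<Rightarrow> real"
  assumes der: "\<And>t. t \<ge> a \<Longrightarrow> (f has_real_derivative f' t) (at t)"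
    and neg: "\<And>t. t \<ge> a \<Longrightarrow> f t = b \<Longrightarrow> f' t < 0"
    and fa: "f a \<le> b" and t: "t \<ge> a"
  shows "f t \<le> b"
proof (rule ccontr)
  assume "\<not> f t \<le> b"
  hence ft: "f t > b" by simp
  have cont: "continuous_on {a..t} f"
    by (intro DERIV_atLeastAtMost_imp_continuous_on) (use der in auto)
  define S where "S = {a..t} \<inter> f -` {..b}"
  have clS: "closed S" unfolding S_def
    by (rule continuous_closed_preimage[OF cont]) auto
  have aS: "a \<in> S" using fa t by (auto simp: S_def)
  have bdd: "bdd_above S" by (auto simp: S_def bdd_above_def)
  define s where "s = Sup S"
  have sS: "s \<in> S" unfolding s_def using closed_contains_Sup[OF _ bdd clS] aS by auto
  have ub: "\<And>x. x \<in> S \<Longrightarrow> x \<le> s" unfolding s_def by (rule cSup_upper[OF _ bdd])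
  have as: "a \<le> s" "s \<le> t" "f s \<le> b" using sS by (auto simp: S_def)
  have cont2: "continuous_on {s..t} f" by (rule continuous_on_subset[OF cont]) (use as in auto)
  obtain x where x: "s \<le> x" "x \<le> t" "f x = b" using IVT'[of f s b t, OF as(3) _ as(2) cont2] ft by auto
  have "x \<in> S" using x as by (auto simp: S_def)
  hence "x = s" using ub x by force
  hence fsb: "f s = b" using x by simp
  have "s < t" using as fsb ft by (cases "s = t") auto
  obtain d where d: "d > 0" "\<And>h. h > 0 \<Longrightarrow> h < d \<Longrightarrow> f s > f (s + h)"
    using DERIV_neg_dec_right[OF der[OF as(1)] neg[OF as(1) fsb]] by blast
  define h where "h = min (d/2) ((t - s)/2)"
  have h1: "h \<le> (t-s)/2" "h \<le> d/2" unfolding h_def by (rule min.cobounded2, rule min.cobounded1)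
  have h: "h > 0" "h < d" "s + h \<le> t" using d(1) \<open>s < t\<close> h1 by (auto simp: h_def)
  have "f (s + h) < b" using d(2)[OF h(1,2)] fsb by simp
  hence "s + h \<in> S" using h as by (auto simp: S_def)
  hence "s + h \<le> s" by (rule ub)
  thus False using h by simp
qed

lemma frac_less_suff: "(b::real) > 0 \<Longrightarrow> d > 0 \<Longrightarrow> a * d < c * b \<Longrightarrow> a / b < c / d"
  by (simp add: field_simps)

theorem lemma2p3:
  fixes u :: "real \<Rightarrow> real" and k :: nat and p \<rho> :: real
  assumes "CARD('n::finite) \<ge> 3"
    and "1 < k" and "2 * k < CARD('n)"
    and "p > real (CARD('n) * k) / real (CARD('n) - 2 * k)"
    and "\<rho> > 0"
    and "regular_solution_1_6 TYPE('n) k p \<rho> u"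
    and "((\<lambda>r. u r * r powr (2 * real k / (p - real k))) \<longlongrightarrow> 0) at_top"
  shows "u \<in> O[at_top](\<lambda>r. r powr ((2 * real k - real CARD('n)) / real k))"
proof -
  define n where "n = CARD('n)"
  define N where "N = real n"
  define K where "K = real k"
  have kn: "2 * k < n" "1 < k" using assms(2,3) by (auto simp: n_def)
  have NK: "N - 2*K > 0" "K > 1" using kn by (auto simp: N_def K_def)
  have pbig: "p * (N - 2*K) > N * K"
  proof -
    have "real (n - 2*k) = N - 2*K" using kn by (simp add: N_def K_def of_nat_diff)
    with assms(4) have "p > N*K/(N - 2*K)" by (simp add: n_def N_def K_def)
    thus ?thesis using NK by (simp add: pos_divide_less_eq)
  qed
  have pK: "p > K"
  proof -
    have "N * K > K * (N - 2*K)" using NK by (simp add: algebra_simps)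
    hence "K * (N - 2*K) < p * (N - 2*K)" using pbig by linarith
    thus ?thesis using NK by (simp add: mult_less_cancel_right)
  qed
  have prob: "problem_1_6 n k p \<rho> u" using assms(6) by (simp add: regular_solution_1_6_def n_def)
  define du where "du = deriv u"
  define w where "w = (\<lambda>s::real. s ^ (n - k) * \<bar>du s\<bar> ^ (k - 1) * du s)"
  define Cb where "Cb = real ((n - 1) choose (k - 1))"
  have Cb: "Cb > 0" using kn by (simp add: Cb_def)
  define c where "c = K / Cb"
  have c: "c > 0" using Cb NK by (simp add: c_def)
  have upos: "\<And>r. r > 0 \<Longrightarrow> u r > 0" using prob by (simp add: problem_1_6_def)
  have dU: "\<And>r. r > 0 \<Longrightarrow> (u has_real_derivative du r) (at r)"
    using prob by (simp add: problem_1_6_def du_def DERIV_deriv_iff_real_differentiable)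
  have dW: "\<And>r. r > 0 \<Longrightarrow> (w has_real_derivative (- (c * r ^ (n - 1) * u r powr p))) (at r)"
  proof -
    fix r :: real assume r: "r > 0"
    then obtain D where D: "((\<lambda>s. s ^ (n - k) * \<bar>deriv u s\<bar> ^ (k - 1) * deriv u s) has_real_derivative D) (at r)"
      "- (1 / real k) * real ((n - 1) choose (k - 1)) * D = r ^ (n - 1) * (u r) powr p"
      using prob by (auto simp: problem_1_6_def)
    define X where "X = r ^ (n - 1) * (u r) powr p"
    have "- (1 / K) * Cb * D = X" using D(2) by (simp add: X_def K_def Cb_def)
    hence "K * (- (1 / K) * Cb * D) = K * X" by simp
    hence "Cb * D = - (K * X)" using NK by (simp add: algebra_simps)
    moreover have "D = (Cb * D) / Cb" using Cb by simp
    ultimately have "D = - (K * X) / Cb" by simp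
    hence "D = - (c * X)" by (simp add: c_def)
    hence "D = - (c * r ^ (n - 1) * u r powr p)" by (simp add: X_def mult.assoc)
    thus "(w has_real_derivative (- (c * r ^ (n - 1) * u r powr p))) (at r)"
      using D(1) by (simp add: w_def du_def)
  qed
  define al where "al = 2 * K / (p - K)"
  define be where "be = (N - 2*K) / K"
  have al: "al > 0" using pK NK by (simp add: al_def)
  have be: "be > 0" using NK by (simp add: be_def)
  have palN: "al < N / p"
  proof -
    have "2*K*p < N * (p - K)" using pbig by (simp add: algebra_simps)
    hence "2*K/(p-K) < N/p" using pK NK by (intro frac_less_suff) (auto simp: algebra_simps)
    thus ?thesis by (simp add: al_def)
  qed
  have beN: "N / p < be"
  proof -
    have "N * K < p * (N - 2*K)" using pbig by simp
    thus ?thesis unfolding be_def using pK NK by (intro frac_less_suff) (auto simp: algebra_simps)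
  qed
  define v where "v = (\<lambda>r. u r * r powr al)"
  have vlim: "(v \<longlongrightarrow> 0) at_top" using assms(7) by (simp add: v_def al_def K_def)
  have ulim: "(u \<longlongrightarrow> 0) at_top"
  proof (rule tendsto_sandwich[OF _ _ tendsto_const vlim])
    show "\<forall>\<^sub>F r in at_top. 0 \<le> u r" using eventually_gt_at_top[of 0]
      by eventually_elim (use upos in force)
    show "\<forall>\<^sub>F r in at_top. u r \<le> v r" using eventually_ge_at_top[of 1]
    proof eventually_elim
      case (elim r)
      have "1 \<le> r powr al" using elim al by (simp add: ge_one_powr_ge_zero)
      thus ?case using upos[of r] elim by (simp add: v_def)
    qed
  qed
  have wsign: "\<And>r. r > 0 \<Longrightarrow> du r \<le> 0 \<Longrightarrow> w r \<le> 0"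
    by (simp add: w_def mult_nonneg_nonpos)
  have wsign2: "\<And>r. r > 0 \<Longrightarrow> du r \<ge> 0 \<Longrightarrow> w r \<ge> 0"
    by (simp add: w_def)
  obtain r1 where r1: "r1 > 0" "w r1 \<le> 0"
  proof -
    have "\<exists>r1>0. w r1 \<le> 0"
    proof (rule ccontr)
      assume "\<not> (\<exists>r1>0. w r1 \<le> 0)"
      hence wp: "\<And>r. r > 0 \<Longrightarrow> w r > 0" by (meson not_le)
      have dup: "\<And>r. r > 0 \<Longrightarrow> du r > 0"
      proof -
        fix r :: real assume r: "r > 0"
        have "\<not> du r \<le> 0" using wp[OF r] wsign[OF r] by linarith
        thus "du r > 0" by simp
      qed
      have "\<forall>\<^sub>F r in at_top. u 1 \<le> u r" using eventually_gt_at_top[of 1]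
      proof eventually_elim
        case (elim r)
        have "u 1 < u r"
        proof (rule DERIV_pos_imp_increasing[OF elim])
          fix x :: real assume "1 \<le> x"
          hence x0: "x > 0" by simp
          show "\<exists>y. DERIV u x :> y \<and> y > 0" using dU[OF x0] dup[OF x0] by blast
        qed
        thus ?case by simp
      qed
      hence "u 1 \<le> 0" using tendsto_lowerbound[OF ulim] by simp
      thus False using upos[of 1] by simp
    qed
    thus ?thesis using that by blast
  qed
  have dWneg: "\<And>r. r > 0 \<Longrightarrow> - (c * r ^ (n - 1) * u r powr p) < 0"
  proof -
    fix r :: real assume r: "r > 0"
    have "c * r ^ (n - 1) * u r powr p > 0" using c upos[OF r] r by (intro mult_pos_pos) auto
    thus "- (c * r ^ (n - 1) * u r powr p) < 0" by simp
  qed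
  have wneg: "\<And>r. r > r1 \<Longrightarrow> w r < 0"
  proof -
    fix r assume r: "r > r1"
    have "w r < w r1"
    proof (rule DERIV_neg_imp_decreasing[OF r])
      fix x assume "r1 \<le> x"
      hence x0: "x > 0" using r1 by simp
      show "\<exists>y. DERIV w x :> y \<and> y < 0" using dW[OF x0] dWneg[OF x0] by blast
    qed
    thus "w r < 0" using r1 by simp
  qed
  have duneg: "\<And>r. r > r1 \<Longrightarrow> du r < 0"
  proof -
    fix r assume r: "r > r1"
    hence r0: "r > 0" using r1 by simp
    have "\<not> du r \<ge> 0" using wneg[OF r] wsign2[OF r0] by linarith
    thus "du r < 0" by simp
  qed
  define M where "M = (\<lambda>r. - w r)"
  have dM: "\<And>r. r > 0 \<Longrightarrow> (M has_real_derivative (c * r ^ (n - 1) * u r powr p)) (at r)"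
    unfolding M_def using DERIV_minus[OF dW] by simp
  have Mform: "\<And>r. r > r1 \<Longrightarrow> M r = r powr (N - K) * (- du r) ^ k"
  proof -
    fix r assume r: "r > r1"
    have a: "\<bar>du r\<bar> = - du r" using duneg[OF r] by simp
    have "(- du r) ^ (k-1) * du r = - ((- du r) ^ k)"
      using kn by (cases k) auto
    moreover have "r ^ (n - k) = r powr (N - K)"
    proof -
      have r0: "r > 0" using r r1 by simp
      have "r powr (N - K) = r powr (real (n - k))" using kn by (simp add: N_def K_def of_nat_diff)
      also have "\<dots> = r ^ (n - k)" using r0 by (simp add: powr_realpow)
      finally show ?thesis by simp
    qed
    ultimately show "M r = r powr (N - K) * (- du r) ^ k"
      by (simp add: M_def w_def a mult.assoc)
  qed
  define de where "de = (be - N/p)/2"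
  define ga where "ga = be - de"
  define e0 where "e0 = 2*K - N"
  have de: "de > 0" using beN by (simp add: de_def)
  have gaeq: "2 * ga = be + N/p" unfolding ga_def de_def by (simp add: field_simps)
  have ga1: "ga > N/p" using beN palN al gaeq by linarith
  have ga2: "ga > al" using beN palN al gaeq by linarith
  have ga3: "ga > 0" using beN palN al gaeq by linarith
  note ga = ga1 ga2 ga3
  define Z where "Z = (\<lambda>r. M r * r powr e0 * u r powr (-K))"
  define Q where "Q = (\<lambda>r. r * (- du r) / u r)"
  define Z' where "Z' = (\<lambda>r. c * r ^ (n - 1) * u r powr p * r powr e0 * u r powr (-K)
      + M r * (e0 * r powr (e0 - 1)) * u r powr (-K) + M r * r powr e0 * (-K * u r powr (-K-1) * du r))"
  have dZ: "\<And>r. r > r1 \<Longrightarrow> (Z has_real_derivative Z' r) (at r)"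
  proof -
    fix r assume r: "r > r1"
    hence r0: "r > 0" using r1 by simp
    have d2: "((\<lambda>r. r powr e0) has_real_derivative e0 * r powr (e0 - 1)) (at r)"
      by (rule has_real_derivative_powr[OF r0])
    have d3: "((\<lambda>r. u r powr (-K)) has_real_derivative (-K) * u r powr (-K - of_nat 1) * du r) (at r)"
      by (rule DERIV_fun_powr[OF dU[OF r0] upos[OF r0]])
    note dd = DERIV_mult'[OF DERIV_mult'[OF dM[OF r0] d2] d3]
    show "(Z has_real_derivative Z' r) (at r)" unfolding Z_def
      by (rule DERIV_cong[OF dd]) (simp add: Z'_def algebra_simps)
  qed
  have ZQ: "\<And>r. r > r1 \<Longrightarrow> Z r = Q r ^ k"
  proof -
    fix r assume r: "r > r1"
    hence r0: "r > 0" using r1 by simp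
    have u0: "u r > 0" using upos[OF r0] .
    have "r powr (N - K) * r powr e0 = r ^ k"
      using r0 by (simp add: e0_def K_def powr_realpow flip: powr_add)
    moreover have "u r powr (-K) = 1 / u r ^ k" using u0 by (simp add: powr_minus K_def powr_realpow divide_inverse)
    ultimately have "Z r = r ^ k * (- du r) ^ k * (1 / u r ^ k)"
      unfolding Z_def Mform[OF r] by (metis (no_types, lifting) mult.assoc mult.commute)
    moreover have "Q r ^ k = r ^ k * (- du r) ^ k * (1 / u r ^ k)"
      unfolding Q_def power_divide power_mult_distrib by simp
    ultimately show "Z r = Q r ^ k" by simp
  qed
  have rZ': "\<And>r. r > r1 \<Longrightarrow> r * Z' r = c * (v r) powr (p - K) + e0 * Z r + K * Z r * Q r"
  proof -
    fix r assume r: "r > r1"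
    hence r0: "r > 0" using r1 by simp
    have u0: "u r > 0" using upos[OF r0] .
    have t1: "r * (c * r ^ (n - 1) * u r powr p * r powr e0 * u r powr (-K)) = c * (v r) powr (p - K)"
    proof -
      have "r * r ^ (n - 1) = r powr N" using r0 kn by (simp add: N_def powr_realpow flip: power_Suc)
      hence a: "r * r ^ (n - 1) * r powr e0 = r powr (2*K)" using r0 by (simp add: e0_def flip: powr_add)
      have b: "u r powr p * u r powr (-K) = u r powr (p - K)" by (simp add: powr_add[symmetric])
      have "(v r) powr (p - K) = u r powr (p - K) * r powr (al * (p - K))"
        using u0 r0 by (simp add: v_def powr_mult powr_powr)
      moreover have "al * (p - K) = 2 * K" using pK by (simp add: al_def)
      ultimately have "(v r) powr (p - K) = u r powr (p - K) * r powr (2*K)" by simp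
      have "r * (c * r ^ (n - 1) * u r powr p * r powr e0 * u r powr (-K))
          = c * ((r * r ^ (n - 1) * r powr e0) * (u r powr p * u r powr (-K)))" by (simp add: mult_ac)
      also have "\<dots> = c * (r powr (2*K) * u r powr (p - K))" by (simp only: a b)
      finally show ?thesis using \<open>(v r) powr (p - K) = u r powr (p - K) * r powr (2*K)\<close> by (simp add: mult_ac)
    qed
    have t2: "r * (M r * (e0 * r powr (e0 - 1)) * u r powr (-K)) = e0 * Z r"
    proof -
      have "r * r powr (e0 - 1) = r powr e0" using r0 by (simp add: powr_diff)
      thus ?thesis by (simp add: Z_def algebra_simps)
    qed
    have t3: "r * (M r * r powr e0 * (-K * u r powr (-K-1) * du r)) = K * Z r * Q r"
    proof -
      have "u r powr (-K-1) = u r powr (-K) / u r" using u0 by (simp add: powr_diff)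
      thus ?thesis using u0 by (simp add: Z_def Q_def field_simps)
    qed
    show "r * Z' r = c * (v r) powr (p - K) + e0 * Z r + K * Z r * Q r"
      unfolding Z'_def distrib_left t1 t2 t3 by simp
  qed
  define b where "b = ga ^ k"
  define zs where "zs = al ^ k / 4"
  define eta where "eta = K * de * zs"
  have zs: "zs > 0" using al by (simp add: zs_def)
  have eta: "eta > 0" using zs de NK by (simp add: eta_def)
  have alb: "al ^ k < b" unfolding b_def using ga al kn by (intro power_strict_mono) auto
  have etab: "eta < K * de * b" using alb zs de NK unfolding eta_def zs_def
    by (intro mult_strict_left_mono) auto
  have Qpos: "\<And>r. r > r1 \<Longrightarrow> Q r > 0"
  proof -
    fix r assume r: "r > r1"
    hence r0: "r > 0" using r1 by simp
    have "r * (- du r) > 0" using r0 duneg[OF r] by (intro mult_pos_pos) auto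
    thus "Q r > 0" unfolding Q_def using upos[OF r0] by (rule divide_pos_pos)
  qed
  have Zpos: "\<And>r. r > r1 \<Longrightarrow> Z r \<ge> 0" using ZQ Qpos by (simp add: less_imp_le)
  have vpos: "\<And>r. r > 0 \<Longrightarrow> v r > 0" using upos by (simp add: v_def)
  have "((\<lambda>r. c * (v r) powr (p - K)) \<longlongrightarrow> c * 0) at_top"
  proof (intro tendsto_mult tendsto_const tendsto_zero_powrI[OF vlim])
    show "\<forall>\<^sub>F x in at_top. 0 \<le> v x" using eventually_gt_at_top[of 0]
      by eventually_elim (use vpos in \<open>simp add: less_imp_le\<close>)
    show "0 < p - K" using pK by simp
    show "((\<lambda>x. p - K) \<longlongrightarrow> p - K) at_top" by (rule tendsto_const)
  qed
  hence "\<forall>\<^sub>F r in at_top. c * (v r) powr (p - K) < eta" using eta by (simp add: order_tendstoD)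
  then obtain R2' where R2': "\<And>r. r \<ge> R2' \<Longrightarrow> c * (v r) powr (p - K) < eta"
    by (auto simp: eventually_at_top_linorder)
  define R2 where "R2 = max R2' (r1 + 1)"
  have R2: "R2 \<ge> r1 + 1" "\<And>r. r \<ge> R2 \<Longrightarrow> c * (v r) powr (p - K) < eta"
    using R2' by (auto simp: R2_def)
  have e0ga: "e0 + K * ga = - (K * de)"
  proof -
    have "K * be = N - 2*K" using NK by (simp add: be_def)
    moreover have "K * ga = K * be - K * de" by (simp add: ga_def right_diff_distrib)
    ultimately show ?thesis by (simp add: e0_def)
  qed
  have Zbig: "\<And>r. r \<ge> R2 \<Longrightarrow> Z r > b"
  proof -
    fix a assume a: "a \<ge> R2"
    show "Z a > b"
    proof (rule ccontr)
    assume "\<not> Z a > b"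
    hence Za: "Z a \<le> b" by simp
    have ar1: "\<And>t. t \<ge> a \<Longrightarrow> t > r1" using a R2 by simp
    have rZle: "\<And>t. t \<ge> a \<Longrightarrow> t * Z' t \<le> eta + Z t * (e0 + K * Q t)"
    proof -
      fix t assume t: "t \<ge> a"
      have "c * (v t) powr (p - K) < eta" using R2 a t by simp
      moreover have "Z t * (e0 + K * Q t) = e0 * Z t + K * Z t * Q t" by (simp add: algebra_simps)
      ultimately show "t * Z' t \<le> eta + Z t * (e0 + K * Q t)" using rZ'[OF ar1[OF t]] by linarith
    qed
    have Zle: "\<And>t. t \<ge> a \<Longrightarrow> Z t \<le> b"
    proof (rule barrier[of a Z Z' b, OF _ _ Za])
      fix t assume "a \<le> t"
      thus "(Z has_real_derivative Z' t) (at t)" by (rule dZ[OF ar1])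
    next
      fix t assume t: "a \<le> t" and Zt: "Z t = b"
      have t0: "t > 0" using ar1[OF t] r1 by simp
      have "Q t ^ k = ga ^ k" using ZQ[OF ar1[OF t]] Zt by (simp add: b_def)
      moreover have "0 < k" using kn by simp
      ultimately have Qga: "Q t = ga"
        using power_eq_imp_eq_base less_imp_le[OF Qpos[OF ar1[OF t]]] less_imp_le[OF ga3] by blast
      have "Z t * (e0 + K * Q t) = - (K * de * b)" using Zt Qga e0ga by simp
      hence "t * Z' t \<le> eta - K * de * b" using rZle[OF t] by linarith
      hence neg: "t * Z' t < 0" using etab by linarith
      have "\<not> Z' t \<ge> 0"
      proof
        assume "Z' t \<ge> 0"
        hence "t * Z' t \<ge> 0" using t0 by simp
        thus False using neg by linarith
      qed
      thus "Z' t < 0" by simp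
    qed
    have Qle: "\<And>t. t \<ge> a \<Longrightarrow> Q t \<le> ga"
    proof -
      fix t assume t: "t \<ge> a"
      show "Q t \<le> ga"
      proof (rule ccontr)
        assume "\<not> Q t \<le> ga"
        hence "ga < Q t" by simp
        moreover have "0 < k" using kn by simp
        ultimately have "ga ^ k < Q t ^ k" using power_strict_mono less_imp_le[OF ga3] by blast
        thus False using Zle[OF t] ZQ[OF ar1[OF t]] by (simp add: b_def)
      qed
    qed
    have Kde: "K * de > 0" using NK de by simp
    have etaKde: "K * de * zs = eta" by (simp add: eta_def)
    define W where "W = (\<lambda>t. (Z t - zs) * t powr (K * de))"
    have Wle: "\<And>t. t \<ge> a \<Longrightarrow> W t \<le> W a"
    proof -
      fix t assume t: "t \<ge> a"
      show "W t \<le> W a"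
      proof (rule DERIV_nonpos_imp_nonincreasing[OF t])
        fix x assume x: "a \<le> x" "x \<le> t"
        have x0: "x > 0" using ar1[OF x(1)] r1 by simp
        note dd = DERIV_mult'[OF DERIV_diff[OF dZ[OF ar1[OF x(1)]] DERIV_const[of zs]] has_real_derivative_powr[OF x0, of "K * de"]]
        define P where "P = x powr (K * de - 1)"
        have P: "P > 0" using x0 by (simp add: P_def)
        have xP: "x powr (K * de) = x * P" using x0 by (simp add: P_def powr_diff)
        have "(Z x - zs) * (K * de * x powr (K * de - 1)) + (Z' x - 0) * x powr (K * de)
              = P * (x * Z' x + K * de * (Z x - zs))" by (simp add: xP P_def algebra_simps)
        moreover have "x * Z' x + K * de * (Z x - zs) \<le> 0"
        proof -
          have "Z x * (e0 + K * Q x) \<le> Z x * (e0 + K * ga)"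
            using Zpos[OF ar1[OF x(1)]] Qle[OF x(1)] NK by (intro mult_left_mono) auto
          hence "x * Z' x \<le> eta - K * de * Z x" using rZle[OF x(1)] e0ga by (simp add: algebra_simps)
          thus ?thesis using etaKde by (simp add: algebra_simps)
        qed
        ultimately have "(Z x - zs) * (K * de * x powr (K * de - 1)) + (Z' x - 0) * x powr (K * de) \<le> 0"
          using P by (simp add: mult_nonneg_nonpos)
        thus "\<exists>y. DERIV W x :> y \<and> y \<le> 0" using dd unfolding W_def by blast
      qed
    qed
    have Zup: "\<And>t. t \<ge> a \<Longrightarrow> Z t \<le> zs + W a * t powr (- (K * de))"
    proof -
      fix t assume t: "t \<ge> a"
      have t0: "t > 0" using ar1[OF t] r1 by simp
      have tp: "t powr (K * de) > 0" using t0 by simp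
      have "(Z t - zs) * t powr (K * de) \<le> W a" using Wle[OF t] by (simp add: W_def)
      hence "Z t - zs \<le> W a / t powr (K * de)" using tp by (simp add: pos_le_divide_eq)
      thus "Z t \<le> zs + W a * t powr (- (K * de))" by (simp add: powr_minus divide_inverse)
    qed
    have "((\<lambda>t. W a * t powr (- (K * de))) \<longlongrightarrow> W a * 0) at_top"
      by (intro tendsto_mult tendsto_const tendsto_neg_powr filterlim_ident) (use Kde in simp)
    hence "\<forall>\<^sub>F t in at_top. W a * t powr (- (K * de)) < zs" using zs by (simp add: order_tendstoD)
    then obtain a2 where a2: "\<And>t. t \<ge> a2 \<Longrightarrow> W a * t powr (- (K * de)) < zs"
      by (auto simp: eventually_at_top_linorder)
    define a3 where "a3 = max a a2"
    have a3: "a3 \<ge> a" "a3 \<ge> a2" by (auto simp: a3_def)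
    have Qsmall: "\<And>t. t \<ge> a3 \<Longrightarrow> Q t < al"
    proof -
      fix t assume t: "t \<ge> a3"
      have ta: "t \<ge> a" using t a3 by simp
      have "Z t < 2 * zs" using Zup[OF ta] a2[of t] t a3 by simp
      also have "2 * zs < al ^ k" using zs by (simp add: zs_def)
      finally have lt: "Q t ^ k < al ^ k" using ZQ[OF ar1[OF ta]] by simp
      show "Q t < al"
      proof (rule ccontr)
        assume "\<not> Q t < al"
        hence "al \<le> Q t" by simp
        hence "al ^ k \<le> Q t ^ k" using power_mono less_imp_le[OF al] by blast
        thus False using lt by simp
      qed
    qed
    have vinc: "\<And>t. t > a3 \<Longrightarrow> v a3 < v t"
    proof -
      fix t assume t: "t > a3"
      show "v a3 < v t"
      proof (rule DERIV_pos_imp_increasing[OF t])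
        fix x assume x: "a3 \<le> x" "x \<le> t"
        have xa: "x \<ge> a" using x a3 by simp
        have x0: "x > 0" using ar1[OF xa] r1 by simp
        have u0: "u x > 0" using upos[OF x0] .
        note dd = DERIV_mult'[OF dU[OF x0] has_real_derivative_powr[OF x0, of al]]
        define P where "P = x powr (al - 1)"
        have P: "P > 0" using x0 by (simp add: P_def)
        have xP: "x powr al = x * P" using x0 by (simp add: P_def powr_diff)
        have "Q x < al" using Qsmall x by simp
        hence "x * (- du x) / u x < al" unfolding Q_def .
        hence "x * (- du x) < al * u x" by (simp only: pos_divide_less_eq[OF u0])
        hence pos: "al * u x + x * du x > 0" by simp
        have "u x * (al * x powr (al - 1)) + du x * x powr al = P * (al * u x + x * du x)"
          by (simp add: xP P_def algebra_simps)
        hence "u x * (al * x powr (al - 1)) + du x * x powr al > 0" using P pos by simp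
        thus "\<exists>y. DERIV v x :> y \<and> y > 0" using dd unfolding v_def by blast
      qed
    qed
    have "\<forall>\<^sub>F t in at_top. v a3 \<le> v t" using eventually_gt_at_top[of a3]
      by eventually_elim (use vinc in \<open>simp add: less_imp_le\<close>)
    hence "v a3 \<le> 0" using tendsto_lowerbound[OF vlim] by simp
    moreover have "v a3 > 0" using vpos ar1[OF a3(1)] r1 by simp
    ultimately show False by simp
    qed
  qed
  have R2r1: "\<And>r. r \<ge> R2 \<Longrightarrow> r > r1" using R2 by simp
  have R2pos: "\<And>r. r \<ge> R2 \<Longrightarrow> r > 0" using R2 r1 by simp
  have Qbig: "\<And>r. r \<ge> R2 \<Longrightarrow> Q r > ga"
  proof -
    fix r assume r: "r \<ge> R2"
    show "Q r > ga"
    proof (rule ccontr)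
      assume "\<not> Q r > ga"
      hence "Q r \<le> ga" by simp
      hence "Q r ^ k \<le> ga ^ k" using power_mono less_imp_le[OF Qpos[OF R2r1[OF r]]] by blast
      thus False using Zbig[OF r] ZQ[OF R2r1[OF r]] by (simp add: b_def)
    qed
  qed
  define C0 where "C0 = u R2 * R2 powr ga"
  have C0: "C0 > 0" using upos R2pos[of R2] by (simp add: C0_def)
  have ubd: "\<And>r. r \<ge> R2 \<Longrightarrow> u r \<le> C0 * r powr (- ga)"
  proof -
    fix r assume r: "r \<ge> R2"
    have "u r * r powr ga \<le> C0" unfolding C0_def
    proof (rule DERIV_nonpos_imp_nonincreasing[OF r])
      fix x assume x: "R2 \<le> x" "x \<le> r"
      have x0: "x > 0" using R2pos[OF x(1)] .
      have u0: "u x > 0" using upos[OF x0] .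
      note dd = DERIV_mult'[OF dU[OF x0] has_real_derivative_powr[OF x0, of ga]]
      define P where "P = x powr (ga - 1)"
      have P: "P > 0" using x0 by (simp add: P_def)
      have xP: "x powr ga = x * P" using x0 by (simp add: P_def powr_diff)
      have "Q x > ga" using Qbig[OF x(1)] .
      hence "ga < x * (- du x) / u x" unfolding Q_def .
      hence "ga * u x < x * (- du x)" by (simp only: pos_less_divide_eq[OF u0])
      hence neg: "ga * u x + x * du x < 0" by simp
      have "u x * (ga * x powr (ga - 1)) + du x * x powr ga = P * (ga * u x + x * du x)"
        by (simp add: xP P_def algebra_simps)
      hence "u x * (ga * x powr (ga - 1)) + du x * x powr ga \<le> 0" using P neg
        by (simp add: mult_pos_neg less_imp_le)
      thus "\<exists>y. DERIV (\<lambda>r. u r * r powr ga) x :> y \<and> y \<le> 0" using dd by blast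
    qed
    moreover have "r powr ga > 0" using R2pos[OF r] by simp
    ultimately have "u r \<le> C0 / r powr ga" by (simp add: pos_le_divide_eq)
    thus "u r \<le> C0 * r powr (- ga)" by (simp add: powr_minus divide_inverse)
  qed
  define e1 where "e1 = N - p * ga"
  have p0: "p > 0" using pK NK by simp
  have e1: "e1 < 0"
  proof -
    have "N < ga * p" using ga1 p0 by (simp add: divide_less_eq)
    thus ?thesis by (simp add: e1_def mult.commute)
  qed
  define A where "A = c * C0 powr p"
  have A: "A > 0" using c C0 by (simp add: A_def)
  define K1 where "K1 = M R2 - A * R2 powr e1 / e1"
  have Mbd: "\<And>r. r \<ge> R2 \<Longrightarrow> M r \<le> K1"
  proof -
    fix r assume r: "r \<ge> R2"
    have "M r - A * r powr e1 / e1 \<le> M R2 - A * R2 powr e1 / e1"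
    proof (rule DERIV_nonpos_imp_nonincreasing[OF r])
      fix x assume x: "R2 \<le> x" "x \<le> r"
      have x0: "x > 0" using R2pos[OF x(1)] .
      have u0: "u x > 0" using upos[OF x0] .
      note dd = DERIV_diff[OF dM[OF x0] DERIV_cmult[OF has_real_derivative_powr[OF x0, of e1], of "A / e1"]]
      have "u x powr p \<le> (C0 * x powr (- ga)) powr p"
        using ubd[OF x(1)] u0 p0 by (intro powr_mono2) auto
      also have "\<dots> = C0 powr p * x powr (- ga * p)" using C0 x0 by (simp add: powr_mult powr_powr)
      finally have up: "u x powr p \<le> C0 powr p * x powr (- ga * p)" .
      have xn: "x ^ (n - 1) = x powr (N - 1)"
      proof -
        have "x powr (N - 1) = x powr (real (n - 1))" using kn by (simp add: N_def of_nat_diff)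
        also have "\<dots> = x ^ (n - 1)" using x0 by (simp add: powr_realpow)
        finally show ?thesis by simp
      qed
      have "c * x ^ (n - 1) * u x powr p \<le> c * x powr (N - 1) * (C0 powr p * x powr (- ga * p))"
        unfolding xn using up c x0 by (intro mult_left_mono) auto
      also have "\<dots> = A * x powr (e1 - 1)"
        using x0 by (simp add: A_def e1_def powr_add[symmetric] algebra_simps)
      finally have le: "c * x ^ (n - 1) * u x powr p \<le> A * x powr (e1 - 1)" .
      have "A / e1 * (e1 * x powr (e1 - 1)) = A * x powr (e1 - 1)" using e1 by simp
      hence "c * x ^ (n - 1) * u x powr p - A / e1 * (e1 * x powr (e1 - 1)) \<le> 0" using le by simp
      thus "\<exists>y. DERIV (\<lambda>r. M r - A * r powr e1 / e1) x :> y \<and> y \<le> 0"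
        using dd by (auto simp: field_simps)
    qed
    moreover have "A * r powr e1 / e1 \<le> 0" using A e1 R2pos[OF r]
      by (intro divide_nonneg_neg) (auto intro: less_imp_le)
    ultimately show "M r \<le> K1" unfolding K1_def by linarith
  qed
  define K2 where "K2 = K1 powr (1 / K)"
  have dubd: "\<And>r. r \<ge> R2 \<Longrightarrow> - du r \<le> K2 * r powr (- (be + 1))"
  proof -
    fix r assume r: "r \<ge> R2"
    have r0: "r > 0" using R2pos[OF r] .
    have x0: "- du r > 0" using duneg[OF R2r1[OF r]] by simp
    have rp: "r powr (N - K) > 0" using r0 by simp
    have Mr: "M r = r powr (N - K) * (- du r) ^ k" using Mform[OF R2r1[OF r]] .
    have Mpos: "M r > 0" unfolding Mr using rp x0 by simp
    have K1pos: "K1 > 0" using Mbd[OF r] Mpos by simp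
    have "(- du r) ^ k = M r / r powr (N - K)" using rp by (simp add: Mr)
    also have "\<dots> \<le> K1 / r powr (N - K)" using Mbd[OF r] rp by (simp add: divide_right_mono)
    finally have le: "(- du r) ^ k \<le> K1 / r powr (N - K)" .
    have "- du r = ((- du r) ^ k) powr (1 / K)"
    proof -
      have "(- du r) ^ k = (- du r) powr K" using x0 by (simp add: K_def powr_realpow)
      hence "((- du r) ^ k) powr (1 / K) = (- du r) powr (K * (1 / K))" by (simp add: powr_powr)
      also have "\<dots> = - du r" using NK x0 by simp
      finally show ?thesis by simp
    qed
    also have "\<dots> \<le> (K1 / r powr (N - K)) powr (1 / K)"
      using le x0 NK by (intro powr_mono2) auto
    also have "\<dots> = K2 / (r powr (N - K)) powr (1 / K)"
      using K1pos rp by (simp add: K2_def powr_divide)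
    also have "(r powr (N - K)) powr (1 / K) = r powr (be + 1)"
    proof -
      have "(N - K) * (1 / K) = be + 1" using NK by (simp add: be_def field_simps)
      thus ?thesis by (simp add: powr_powr)
    qed
    finally have "- du r \<le> K2 / r powr (be + 1)" .
    moreover have "r powr (- (be + 1)) = inverse (r powr (be + 1))" by (rule powr_minus)
    ultimately show "- du r \<le> K2 * r powr (- (be + 1))" by (simp only: divide_inverse)
  qed
  have K2: "K2 \<ge> 0" by (simp add: K2_def)
  have ufin: "\<And>r. r \<ge> R2 \<Longrightarrow> u r \<le> K2 / be * r powr (- be)"
  proof -
    fix r assume r: "r \<ge> R2"
    define H where "H = (\<lambda>t. K2 / be * t powr (- be) - u t)"
    have Hdec: "\<And>t. t \<ge> r \<Longrightarrow> H t \<le> H r"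
    proof -
      fix t assume t: "t \<ge> r"
      show "H t \<le> H r"
      proof (rule DERIV_nonpos_imp_nonincreasing[OF t])
        fix x assume x: "r \<le> x" "x \<le> t"
        have xR: "x \<ge> R2" using x r by simp
        have x0: "x > 0" using R2pos[OF xR] .
        note dd = DERIV_diff[OF DERIV_cmult[OF has_real_derivative_powr[OF x0, of "- be"], of "K2 / be"] dU[OF x0]]
        have "K2 / be * (- be * x powr (- be - 1)) = - (K2 * x powr (- (be + 1)))" using be by simp
        hence "K2 / be * (- be * x powr (- be - 1)) - du x \<le> 0" using dubd[OF xR] by simp
        thus "\<exists>y. DERIV H x :> y \<and> y \<le> 0" using dd unfolding H_def by blast
      qed
    qed
    have "(H \<longlongrightarrow> K2 / be * 0 - 0) at_top" unfolding H_def
      by (intro tendsto_diff tendsto_mult tendsto_const tendsto_neg_powr filterlim_ident ulim) (use be in simp)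
    moreover have "\<forall>\<^sub>F t in at_top. H t \<le> H r" using eventually_ge_at_top[of r]
      by eventually_elim (rule Hdec)
    ultimately have "K2 / be * 0 - 0 \<le> H r" by (rule tendsto_upperbound) simp
    thus "u r \<le> K2 / be * r powr (- be)" by (simp add: H_def)
  qed
  have expo: "(2 * real k - real CARD('n)) / real k = - be"
    by (simp add: be_def N_def K_def n_def minus_divide_left)
  show ?thesis unfolding expo
  proof (rule bigoI[where c = "K2 / be"])
    show "\<forall>\<^sub>F r in at_top. norm (u r) \<le> K2 / be * norm (r powr (- be))"
      using eventually_ge_at_top[of R2]
    proof eventually_elim
      case (elim r)
      have r0: "r > 0" using R2pos[OF elim] .
      have "norm (u r) = u r" using upos[OF r0] by simp
      moreover have "norm (r powr (- be)) = r powr (- be)" by simp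
      ultimately show ?case using ufin[OF elim] by simp
    qed
  qed
qed
end
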